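(* For every integer $n\ge 0$, $${}_3F_2\!\left(\begin{matrix}-2n,\,-2n-1,\,\tfrac12\\ -2n+\tfrac12,\,2\end{matrix};1\right)=\frac{(2n+1)!\,(2n)!^3}{(4n)!\,n!^3\,(n+1)!},$$ and $${}_3F_2\!\left(\begin{matrix}-2n-1,\,-2n-2,\,\tfrac12\\ -2n-\tfrac12,\,2\end{matrix};1\right)=0.$$
   Context: ${}_3F_2\!\left(\begin{matrix}a_1,a_2,a_3\\ b_1,b_2\end{matrix};z\right)=\sum_{j\ge0}\frac{(a_1)_j(a_2)_j(a_3)_j}{(b_1)_j(b_2)_j}\frac{z^j}{j!}$, where $(x)_j=x(x+1)\cdots(x+j-1)$ is the Pochhammer symbol; when $a_1=-m$ is a nonpositive integer the series terminates at $j=m$. *)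

theory Defs
  imports Complex_Main
begin

text \<open>Terminating generalized hypergeometric series 3F2 with first numerator
parameter -m (m a natural number): the series terminates at j = m.\<close>
definition hyp3F2_term :: "nat \<Rightarrow> real \<Rightarrow> real \<Rightarrow> real \<Rightarrow> real \<Rightarrow> real \<Rightarrow> real" where
  "hyp3F2_term m a2 a3 b1 b2 z =
     (\<Sum>j=0..m. pochhammer (- real m) j * pochhammer a2 j * pochhammer a3 j
                / (pochhammer b1 j * pochhammer b2 j) * z ^ j / fact j)"

end

theory Submission
  imports Defs
begin

definition T :: "nat \<Rightarrow> nat \<Rightarrow> real" where
 "T m j = pochhammer (- real m) j * pochhammer (- real m - 1) j * pochhammer (1/2) j
     / (pochhammer (1/2 - real m) j * pochhammer 2 j) / fact j"

definition NN :: "real \<Rightarrow> real \<Rightarrow> real" where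
 "NN x y = 12*y - 26*y^2 - 8*y^3 + 26*y^4 - 4*y^5
   + x*(68*y - 82*y^2 - 74*y^3 + 68*y^4 - 8*y^5)
   + x^2*(141*y - 59*y^2 - 138*y^3 + 58*y^4 - 4*y^5)
   + x^3*(131*y + 23*y^2 - 92*y^3 + 16*y^4)
   + x^4*(54*y + 34*y^2 - 20*y^3) + x^5*(8*y + 8*y^2)"

definition G :: "nat \<Rightarrow> nat \<Rightarrow> real" where
 "G m j = T (m+2) j * NN (real m) (real j) * (2*real m+1)*(2*real m+3) /
   ((real m+1)*(real m+2)^2*(real m+3)*(2*real j-2*real m-1)*(2*real j-2*real m-3))"

lemma poch_shift: "pochhammer (a::real) j * (a + real j) = a * pochhammer (a+1) j"
  using pochhammer_rec[of a j] pochhammer_rec'[of a j] by (simp add: mult.commute)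

lemma poch_shift2: "b = a+1 \<Longrightarrow> pochhammer (a::real) j * (a + real j) = a * pochhammer b j"
  using poch_shift by simp

lemma half_ne: "2*real j - 2*real m + (c::real) \<noteq> 0" if "c = 1 \<or> c = -1 \<or> c = -3 \<or> c = 3 \<or> c = -5" for j m
proof
  assume h: "2*real j - 2*real m + c = 0"
  from that show False
  proof (elim disjE)
    assume "c=1" with h have "real (2*j+1) = real (2*m)" by simp
    then have "2*j+1 = 2*m" by linarith
    then show False by presburger
  next
    assume "c=-1" with h have "real (2*j) = real (2*m+1)" by simp
    then have "2*j = 2*m+1" by linarith
    then show False by presburger
  next
    assume "c=-3" with h have "real (2*j) = real (2*m+3)" by simp
    then have "2*j = 2*m+3" by linarith
    then show False by presburger
  next
    assume "c=3" with h have "real (2*j+3) = real (2*m)" by simp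
    then have "2*j+3 = 2*m" by linarith
    then show False by presburger
  next
    assume "c=-5" with h have "real (2*j) = real (2*m+5)" by simp
    then have "2*j = 2*m+5" by linarith
    then show False by presburger
  qed
qed

lemma pid: fixes x y :: real shows
 "(12+28*x+20*x^2+4*x^3)*(x+1-y)*(x+2-y)^2*(x+3-y)*(2*x+3)*(2*x+1)*(2*y-2*x+1)*(y+1)*(y+2)
  - (12+35*x+24*x^2+4*x^3)*((x+1)*(x+2)^2*(x+3)*(2*y-2*x-3)*(2*y-2*x-1)*(2*y-2*x+1)*(y+1)*(y+2))
  = (y-x-2)*(y-x-3)*(2*y+1)*NN x (y+1)*(2*x+1)*(2*x+3) - NN x y*(2*x+1)*(2*x+3)*(2*y-2*x+1)*(y+1)*(y+2)"
  unfolding NN_def by algebra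

lemma L1: fixes A B N px H C u1 u2 e K f u3 w :: real
  assumes "px\<noteq>0" "u1\<noteq>0" "u2\<noteq>0" "u3\<noteq>0" "w\<noteq>0" "e\<noteq>0" "C\<noteq>0" "K\<noteq>0" "f\<noteq>0"
  shows "(A*B*N/px)*H/((C*u1*u2/e)*K)/f = A*B*H/(C*K*f) * (N*e*u3*w/(px*u1*u2*u3*w))"
  using assms by (simp add: field_simps)

lemma L2: fixes Z N px u1 u2 u3 w :: real
  assumes "px\<noteq>0" "u1\<noteq>0" "u2\<noteq>0" "u3\<noteq>0" "w\<noteq>0"
  shows "Z*N/(px*u2*u1) = Z*(N*u3*w/(px*u1*u2*u3*w))"
  using assms by (simp add: field_simps)

lemma L3: fixes Z N p px u1 u2 u3 w :: real
  assumes "px\<noteq>0" "u1\<noteq>0" "u2\<noteq>0" "u3\<noteq>0" "w\<noteq>0"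
  shows "Z*(p/(u1*w))*N/(px*u3*u2) = Z*(p*N/(px*u1*u2*u3*w))"
  using assms by (simp add: field_simps)

lemma L4: fixes M c0 c2 a b c Z :: real
  assumes "M \<noteq> 0" "c0*a - c2*M = b - c"
  shows "c0*(Z*(a/M)) - c2*Z = Z*(b/M) - Z*(c/M)"
proof -
  have "Z*(b/M) - Z*(c/M) = Z*(b-c)/M" by (simp add: diff_divide_distrib right_diff_distrib)
  also have "... = Z*(c0*a - c2*M)/M" using assms(2) by simp
  also have "... = c0*(Z*(a/M)) - c2*Z" using assms(1) by (simp add: field_simps)
  finally show ?thesis by simp
qed

lemma tele:
  "(12+28*real m+20*real m^2+4*real m^3) * T m j - (12+35*real m+24*real m^2+4*real m^3) * T (m+2) j
     = G m (j+1) - G m j"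
proof -
  define x where "x = real m"
  define y where "y = real j"
  define A where "A = pochhammer (-x-2) j"
  define B where "B = pochhammer (-x-3) j"
  define C where "C = pochhammer (-3/2-x) j"
  define H where "H = pochhammer (1/2::real) j"
  define K where "K = pochhammer (2::real) j"
  define f where "f = (fact j :: real)"
  have x0: "x \<ge> 0" unfolding x_def by simp
  have y0: "y \<ge> 0" unfolding y_def by (simp add: algebra_simps)
  have Kn: "K \<noteq> 0" unfolding K_def by (simp add: pochhammer_eq_0_iff)
  have fn: "f \<noteq> 0" unfolding f_def by simp
  have Cn: "C \<noteq> 0" unfolding C_def x_def
  proof
    assume "pochhammer (-3/2 - real m) j = 0"
    then obtain k where "k < j" "-3/2 - real m = - of_nat k" by (auto simp: pochhammer_eq_0_iff)
    then have "2*real k - 2*real m + (-3) = 0" by simp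
    then show False using half_ne[of "-3" k m] by simp
  qed
  have d1: "2*y-2*x-1 \<noteq> 0" using half_ne[of "-1" j m] unfolding x_def y_def by simp
  have d2: "2*y-2*x-3 \<noteq> 0" using half_ne[of "-3" j m] unfolding x_def y_def by simp
  have d3: "2*y-2*x+1 \<noteq> 0" using half_ne[of "1" j m] unfolding x_def y_def by simp
  have d4: "2*y-2*x-5 \<noteq> 0" using half_ne[of "-5" j m] unfolding x_def y_def by simp
  have e1: "pochhammer (-x-1) j * (-x-1+y) = (-x-1) * pochhammer (-x) j"
    unfolding y_def by (rule poch_shift2) simp
  have e2: "A * (-x-2+y) = (-x-2) * pochhammer (-x-1) j"
    unfolding y_def A_def by (rule poch_shift2) simp
  have e3: "B * (-x-3+y) = (-x-3) * A"
    unfolding y_def A_def B_def by (rule poch_shift2) simp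
  have e4: "pochhammer (-1/2-x) j * (-1/2-x+y) = (-1/2-x) * pochhammer (1/2-x) j"
    unfolding y_def by (rule poch_shift2) simp
  have e5: "C * (-3/2-x+y) = (-3/2-x) * pochhammer (-1/2-x) j"
    unfolding y_def C_def by (rule poch_shift2) simp
  have P1: "pochhammer (-x-1) j = A*(x+2-y)/(x+2)"
  proof -
    have "pochhammer (-x-1) j * (x+2) = A*(x+2-y)" using e2 by algebra
    then show ?thesis using x0 by (simp add: field_simps)
  qed
  have Aeq: "A = B*(x+3-y)/(x+3)"
  proof -
    have "A * (x+3) = B*(x+3-y)" using e3 by algebra
    then show ?thesis using x0 by (simp add: field_simps)
  qed
  have P0: "pochhammer (-x) j = pochhammer (-x-1) j*(x+1-y)/(x+1)"
  proof -
    have "pochhammer (-x) j * (x+1) = pochhammer (-x-1) j*(x+1-y)" using e1 by algebra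
    then show ?thesis using x0 by (simp add: field_simps)
  qed
  have Q1: "pochhammer (-1/2-x) j = C*(x+3/2-y)/(x+3/2)"
  proof -
    have "pochhammer (-1/2-x) j * (x+3/2) = C*(x+3/2-y)" using e5 by algebra
    then show ?thesis using x0 by (simp add: field_simps)
  qed
  have Q0: "pochhammer (1/2-x) j = pochhammer (-1/2-x) j*(x+1/2-y)/(x+1/2)"
  proof -
    have "pochhammer (1/2-x) j * (x+1/2) = pochhammer (-1/2-x) j*(x+1/2-y)" using e4 by algebra
    then show ?thesis using x0 by (simp add: field_simps)
  qed
  have T2: "T (m+2) j = A*B*H/(C*K*f)"
  proof -
    have "- real (m+2) = -x-2" "- real (m+2) - 1 = -x-3" "1/2 - real (m+2) = -3/2-x"
      unfolding x_def by simp_all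
    then have "T (m+2) j = pochhammer (-x-2) j * pochhammer (-x-3) j * pochhammer (1/2) j / (pochhammer (-3/2-x) j * pochhammer 2 j)/fact j"
      unfolding T_def by (simp only:)
    then show ?thesis unfolding A_def B_def C_def H_def K_def f_def by simp
  qed
  have T2s: "T (m+2) (j+1) = A*B*H/(C*K*f) * ((-x-2+y)*(-x-3+y)*(1/2+y)/((-3/2-x+y)*(2+y)*(y+1)))"
  proof -
    have "- real (m+2) = -x-2" "- real (m+2) - 1 = -x-3" "1/2 - real (m+2) = -3/2-x"
      unfolding x_def by simp_all
    then have "T (m+2) (j+1) = pochhammer (-x-2) (Suc j) * pochhammer (-x-3) (Suc j) * pochhammer (1/2) (Suc j) / (pochhammer (-3/2-x) (Suc j) * pochhammer 2 (Suc j))/fact (Suc j)"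
      unfolding T_def by (simp only: Suc_eq_plus1)
    then show ?thesis unfolding A_def B_def C_def H_def K_def f_def y_def
      by (simp only: pochhammer_rec' fact_Suc) (simp add: field_simps)
  qed
  define Z where "Z = A*B*H/(C*K*f)"
  define u1 where "u1 = 2*y-2*x-3"
  define u2 where "u2 = 2*y-2*x-1"
  define u3 where "u3 = 2*y-2*x+1"
  define px where "px = (x+1)*(x+2)^2*(x+3)"
  define w where "w = (y+1)*(y+2)"
  define e where "e = (2*x+3)*(2*x+1)"
  define N0 where "N0 = (x+1-y)*(x+2-y)^2*(x+3-y)"
  define p where "p = (y-x-2)*(y-x-3)*(2*y+1)"
  define M where "M = px*u1*u2*u3*w"
  have pxn: "px \<noteq> 0" unfolding px_def using x0 by (auto simp: add_nonneg_eq_0_iff)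
  have u1n: "u1 \<noteq> 0" using d2 unfolding u1_def .
  have u2n: "u2 \<noteq> 0" using d1 unfolding u2_def .
  have u3n: "u3 \<noteq> 0" using d3 unfolding u3_def .
  have wn: "w \<noteq> 0" unfolding w_def using y0 by (auto simp: add_nonneg_eq_0_iff)
  have en: "e \<noteq> 0" unfolding e_def using x0 by (auto simp: add_nonneg_eq_0_iff)
  have hT2: "T (m+2) j = Z" using T2 unfolding Z_def .
  have PP: "pochhammer (-x) j * pochhammer (-x-1) j = A*B*N0/px"
  proof -
    have "pochhammer (-x) j * pochhammer (-x-1) j * px = A*B*N0"
      unfolding px_def N0_def using e1 e2 e3 by algebra
    then show ?thesis using pxn by (simp add: eq_divide_eq)
  qed
  have QQ: "pochhammer (1/2-x) j = C*u1*u2/e"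
  proof -
    have "pochhammer (1/2-x) j * e = C*u1*u2"
      unfolding u1_def u2_def e_def using e4 e5 by algebra
    then show ?thesis using en by (simp add: eq_divide_eq)
  qed
  have hT0: "T m j = Z * (N0*e*u3*w / M)"
  proof -
    have "T m j = pochhammer (-x) j * pochhammer (-x-1) j * H / (pochhammer (1/2-x) j * K) / f"
      unfolding T_def x_def H_def K_def f_def by simp
    also have "... = Z * (N0*e*u3*w / M)"
      unfolding PP QQ Z_def M_def by (rule L1) (use Cn Kn fn pxn u1n u2n u3n wn en in auto)
    finally show ?thesis .
  qed
  have hG0: "G m j = Z * (NN x y*e*u3*w / M)"
  proof -
    have "G m j = T (m+2) j * (NN x y*e)/(px*u2*u1)"
      unfolding G_def px_def u1_def u2_def x_def y_def e_def by (simp add: algebra_simps)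
    also have "... = Z * (NN x y*e*u3*w / M)"
      unfolding hT2 M_def by (rule L2) (use pxn u1n u2n u3n wn in auto)
    finally show ?thesis .
  qed
  have fr: "(-x-2+y)*(-x-3+y)*(1/2+y)/((-3/2-x+y)*(2+y)*(y+1)) = p/(u1*w)"
  proof -
    have den: "(-3/2-x+y)*(2+y)*(y+1) = u1*w/2" unfolding u1_def w_def by (simp add: algebra_simps)
    have num: "(-x-2+y)*(-x-3+y)*(1/2+y) = p/2" unfolding p_def by (simp add: algebra_simps)
    show ?thesis unfolding den num using u1n wn by simp
  qed
  have hG1: "G m (j+1) = Z * (p*(NN x (y+1)*e) / M)"
  proof -
    have "G m (j+1) = T (m+2) (j+1) * (NN x (y+1)*e)/(px*u3*u2)"
      unfolding G_def px_def u3_def u2_def x_def y_def e_def by (simp add: algebra_simps)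
    also have "... = Z * (p*(NN x (y+1)*e) / M)"
      unfolding T2s Z_def[symmetric] fr M_def by (rule L3) (use pxn u1n u2n u3n wn in auto)
    finally show ?thesis .
  qed
  have key: "(12+28*x+20*x^2+4*x^3)*(N0*e*u3*w)
     - (12+35*x+24*x^2+4*x^3)*M = p*(NN x (y+1)*e) - NN x y*e*u3*w"
    using pid[of x y] unfolding M_def px_def u1_def u2_def u3_def N0_def w_def e_def p_def by algebra
  have Mn: "M \<noteq> 0" unfolding M_def using pxn u1n u2n u3n wn by simp
  show ?thesis
    unfolding hT0 hT2 hG0 hG1 x_def[symmetric]
    by (rule L4[OF Mn key])
qed

lemma T_zero: "j > m \<Longrightarrow> T m j = 0"
  unfolding T_def using pochhammer_of_nat_eq_0_lemma[of m j, where ?'a=real] by simp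

definition S :: "nat \<Rightarrow> real" where "S m = (\<Sum>j=0..m. T m j)"

lemma S_ext: assumes "m \<le> K" shows "(\<Sum>j=0..K. T m j) = S m"
proof -
  obtain p where K: "K = m+p" using assms le_Suc_ex by blast
  have "(\<Sum>j\<in>{m+1..m+p}. T m j) = 0" by (rule sum.neutral) (simp add: T_zero)
  moreover have "(\<Sum>j=0..m+p. T m j) = (\<Sum>j=0..m. T m j) + (\<Sum>j\<in>{m+1..m+p}. T m j)"
    by (rule sum.ub_add_nat) simp
  ultimately show ?thesis unfolding S_def K by simp
qed

lemma recS: "(12+28*real m+20*real m^2+4*real m^3) * S m - (12+35*real m+24*real m^2+4*real m^3) * S (m+2) = 0"
proof -
  have "(12+28*real m+20*real m^2+4*real m^3) * S m - (12+35*real m+24*real m^2+4*real m^3) * S (m+2)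
      = (\<Sum>j=0..m+2. (12+28*real m+20*real m^2+4*real m^3) * T m j - (12+35*real m+24*real m^2+4*real m^3) * T (m+2) j)"
  proof -
    have "S m = (\<Sum>j=0..m+2. T m j)" using S_ext[of m "m+2"] by simp
    moreover have "S (m+2) = (\<Sum>j=0..m+2. T (m+2) j)" unfolding S_def by simp
    ultimately show ?thesis by (simp only: sum_subtractf sum_distrib_left)
  qed
  also have "... = (\<Sum>j=0..m+2. G m (Suc j) - G m j)"
    by (rule sum.cong) (simp_all only: tele Suc_eq_plus1)
  also have "... = G m (Suc (m+2)) - G m 0"
    by (rule sum_Suc_diff) simp
  also have "... = 0"
  proof -
    have "T (m+2) (Suc (m+2)) = 0" by (rule T_zero) simp
    then have "G m (Suc (m+2)) = 0" unfolding G_def by simp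
    moreover have "G m 0 = 0" unfolding G_def NN_def by simp
    ultimately show ?thesis by simp
  qed
  finally show ?thesis .
qed

lemma recS': "S (m+2) = 4*(real m+1)^2*(real m+3) / ((real m+4)*(2*real m+1)*(2*real m+3)) * S m"
proof -
  have c: "(12+35*real m+24*real m^2+4*real m^3) = (real m+4)*(2*real m+1)*(2*real m+3)"
    "12+28*real m+20*real m^2+4*real m^3 = 4*(real m+1)^2*(real m+3)"
    by (simp_all add: algebra_simps power2_eq_square power3_eq_cube)
  have pos: "(real m+4)*(2*real m+1)*(2*real m+3) > 0" by (simp add: add_pos_nonneg)
  have "(real m+4)*(2*real m+1)*(2*real m+3) * S (m+2) = 4*(real m+1)^2*(real m+3) * S m"
    using recS[of m] unfolding c by simp
  then show ?thesis using pos by (simp add: field_simps)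
qed

lemma S0: "S 0 = 1" unfolding S_def T_def by simp
lemma S1: "S 1 = 0" unfolding S_def T_def by (simp add: pochhammer_Suc)

lemma S_odd: "S (2*n+1) = 0"
proof (induction n)
  case 0 then show ?case using S1 by simp
next
  case (Suc n)
  have "S (2*Suc n+1) = S ((2*n+1)+2)" by (simp add: algebra_simps)
  then show ?case using recS'[of "2*n+1"] Suc by simp
qed

definition R :: "nat \<Rightarrow> real" where
  "R n = fact (2*n+1) * fact (2*n) ^ 3 / (fact (4*n) * fact n ^ 3 * fact (n+1))"

lemma factS: "(fact (Suc k) :: real) = (real k + 1) * fact k"
  by (simp add: fact_Suc)

lemma Rgen: fixes y F1 F2 F4 :: real assumes "y \<ge> 0" "F1 > 0" "F2 > 0" "F4 > 0"
 shows "(2*y+3)*(2*y+2)*((2*y+1)*F2) * ((2*y+2)*(2*y+1)*F2)^3 / ((4*y+4)*(4*y+3)*(4*y+2)*(4*y+1)*F4 * ((y+1)*F1)^3 * ((y+2)*(y+1)*F1))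
 = 4*(2*y+1)^2*(2*y+3) / ((2*y+4)*(4*y+1)*(4*y+3)) * (((2*y+1)*F2) * F2^3 / (F4 * F1^3 * ((y+1)*F1)))"
proof -
  have n1: "(4*y+4)*(4*y+3)*(4*y+2)*(4*y+1)*F4 * ((y+1)*F1)^3 * ((y+2)*(y+1)*F1) \<noteq> 0"
  proof -
    have "4*y+4 \<noteq> 0" "4*y+3 \<noteq> 0" "4*y+2 \<noteq> 0" "4*y+1 \<noteq> 0" "y+1 \<noteq> 0" "y+2 \<noteq> 0"
      using assms(1) by linarith+
    then show ?thesis using assms by simp
  qed
  have n2: "(2*y+4)*(4*y+1)*(4*y+3) * (F4 * F1^3 * ((y+1)*F1)) \<noteq> 0"
  proof -
    have "2*y+4 \<noteq> 0" "4*y+3 \<noteq> 0" "4*y+1 \<noteq> 0" "y+1 \<noteq> 0"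
      using assms(1) by linarith+
    then show ?thesis using assms by simp
  qed
  show ?thesis unfolding times_divide_times_eq
    by (subst frac_eq_eq[OF n1 n2]) algebra
qed

lemma R_step: "R (n+1) = 4*(2*real n+1)^2*(2*real n+3) / ((2*real n+4)*(4*real n+1)*(4*real n+3)) * R n"
proof -
  have f1: "(fact (2*(n+1)+1)::real) = (2*real n+3)*(2*real n+2)*fact (2*n+1)"
  proof -
    have "2*(n+1)+1 = Suc (Suc (2*n+1))" by simp
    then show ?thesis by (simp only: factS) (simp add: algebra_simps)
  qed
  have f2: "(fact (2*(n+1))::real) = (2*real n+2)*(2*real n+1)*fact (2*n)"
  proof -
    have "2*(n+1) = Suc (Suc (2*n))" by simp
    then show ?thesis by (simp only: factS) (simp add: algebra_simps)
  qed
  have f3: "(fact (4*(n+1))::real) = (4*real n+4)*(4*real n+3)*(4*real n+2)*(4*real n+1)*fact (4*n)"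
  proof -
    have "4*(n+1) = Suc (Suc (Suc (Suc (4*n))))" by simp
    then show ?thesis by (simp only: factS) (simp add: algebra_simps)
  qed
  have f4: "(fact (n+1)::real) = (real n+1)*fact n"
    by (simp only: Suc_eq_plus1[symmetric] factS)
  have f5: "(fact (n+1+1)::real) = (real n+2)*(real n+1)*fact n"
  proof -
    have "n+1+1 = Suc (Suc n)" by simp
    then show ?thesis by (simp only: factS) (simp add: algebra_simps)
  qed
  have f6: "(fact (2*n+1)::real) = (2*real n+1)*fact (2*n)"
    by (simp only: Suc_eq_plus1[symmetric] factS) simp
  have pos: "(fact n::real) > 0" "(fact (2*n)::real) > 0" "(fact (4*n)::real) > 0" by simp_all
  show ?thesis
    unfolding R_def f1 f2 f3 f4 f5 f6 by (rule Rgen) (use pos in auto)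
qed

lemma S_even: "S (2*n) = R n"
proof (induction n)
  case 0 then show ?case using S0 by (simp add: R_def)
next
  case (Suc n)
  have "S (2*Suc n) = S (2*n+2)" by simp
  also have "... = 4*(real (2*n)+1)^2*(real (2*n)+3) / ((real (2*n)+4)*(2*real (2*n)+1)*(2*real (2*n)+3)) * S (2*n)"
    by (rule recS')
  also have "... = R (n+1)" unfolding R_step Suc by (simp add: algebra_simps)
  finally show ?case by simp
qed

lemma S_hyp: "hyp3F2_term m (- real m - 1) (1/2) (1/2 - real m) 2 1 = S m"
  unfolding hyp3F2_term_def S_def T_def by simp

theorem mainTheorem8:
  fixes n :: nat
  shows "hyp3F2_term (2*n) (- 2 * real n - 1) (1/2) (- 2 * real n + 1/2) 2 1
           = fact (2*n+1) * fact (2*n) ^ 3 / (fact (4*n) * fact n ^ 3 * fact (n+1)) \<and>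
         hyp3F2_term (2*n+1) (- 2 * real n - 2) (1/2) (- 2 * real n - 1/2) 2 1 = 0"
proof
  have "hyp3F2_term (2*n) (- 2 * real n - 1) (1/2) (- 2 * real n + 1/2) 2 1
      = hyp3F2_term (2*n) (- real (2*n) - 1) (1/2) (1/2 - real (2*n)) 2 1" by simp
  also have "... = R n" using S_hyp[of "2*n"] S_even[of n] by simp
  finally show "hyp3F2_term (2*n) (- 2 * real n - 1) (1/2) (- 2 * real n + 1/2) 2 1
           = fact (2*n+1) * fact (2*n) ^ 3 / (fact (4*n) * fact n ^ 3 * fact (n+1))" unfolding R_def .
next
  have "hyp3F2_term (2*n+1) (- 2 * real n - 2) (1/2) (- 2 * real n - 1/2) 2 1
      = hyp3F2_term (2*n+1) (- real (2*n+1) - 1) (1/2) (1/2 - real (2*n+1)) 2 1"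
  proof -
    have a: "- 2 * real n - 2 = - real (2*n+1) - 1" "- 2 * real n - 1/2 = 1/2 - real (2*n+1)" by simp_all
    show ?thesis by (simp only: a)
  qed
  also have "... = 0" using S_hyp[of "2*n+1"] S_odd[of n] by simp
  finally show "hyp3F2_term (2*n+1) (- 2 * real n - 2) (1/2) (- 2 * real n - 1/2) 2 1 = 0" .
qed

end
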